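(* Assume (A1), (A2), (A3), and that for each class $c\in[C]$ the revision protocol $\rho^c$ is an excess payoff or a pairwise comparison protocol. If $\mu\in X$ is a rest point of the master equation, i.e., $f^{c,d}_{s,u}(\mu)+f^{c,r}_{s,u}(\mu)=0$ for all $c\in[C]$, $s\in\mathcal S^c$, $u\in\mathcal U^c_D$, then $\mu$ is a mixed stationary Nash equilibrium.
   Context: Model: classes $c\in[C]$ with masses $m^c>0$, finite state sets $\mathcal S^c$, nonempty finite admissible action sets $\mathcal A^c(s)$ ($\mathcal A^c=\bigcup_s\mathcal A^c(s)$), transition kernels $\phi^c(\cdot\mid s,a)\in\mathcal P(\mathcal S^c)$, action rates $\lambda^c>0$; $p=\sum_c|\mathcal S^c|,q=\sum_c|\mathcal A^c|$. $\mathcal U^c_D$ = deterministic policies ($s\mapsto u(s)\in\mathcal A^c(s)$; $u(a\mid s)=\mathbf 1[a=u(s)]$), $n^c=|\mathcal U^c_D|$. $\phi^{c,u}_{ss'}=\phi^c(s\mid s',u(s'))$. (A2): for all $c,u\in\mathcal U^c_D$, $\phi^{c,u}$ has exactly one recurrent communicating class; $\eta^{c,u}$ is the unique stationary distribution of the continuous-time chain with generator $\lambda^c(\phi^{c,u}-I)$. $X=\prod_c\{\mu^c\in\mathbb R_{\ge0}^{\mathcal S^c\times\mathcal U^c_D}:\sum\mu^c=m^c\}$, $X_{\mathcal S\times\mathcal A}=\prod_c\{\nu\in\mathbb R_{\ge0}^{\mathcal S^c\times\mathcal A^c}:\sum\nu=m^c\}$, $X^c_{\mathcal U_D}=\{\sigma\in\mathbb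 R^{n^c}_{\ge0}:\sum\sigma=m^c\}$; $\mu^c_{\mathcal S\times\mathcal A}[s,a]=\sum_u\mu^c[s,u]u(a\mid s)$; $\mu^c[\mathcal S^c,u]=\sum_s\mu^c[s,u]$, $\mu^c[\mathcal S^c,\cdot]=(\mu^c[\mathcal S^c,u])_u$. Rewards $r^c:\mathcal S^c\times\mathcal A^c\times X_{\mathcal S\times\mathcal A}\to\mathbb R$; (A1): each $r^c(s,a,\cdot)$ extends to $\mathbb R^{pq}_{\ge0}$ with an extension continuously differentiable on $X_{\mathcal S\times\mathcal A}$. $F^c_u(\mu)=\sum_{s}\sum_{a\in\mathcal A^c(s)}\eta^{c,u}(s)u(a\mid s)r^c(s,a,\mu_{\mathcal S\times\mathcal A})$, $F^c(\mu)=(F^c_u(\mu))_u$. MSNE: $\mu\in X$ with, for all $c,u$: (i) $\mu^c[\mathcal S^c,u]>0\Rightarrow F^c_u(\mu)\ge F^c_v(\mu)\ \forall v\in\mathcal U^c_D$; (ii) $\mu^c[s,u]=\eta^{c,u}(s)\mu^c[\mathcal S^c,u]$ for all $s$. Revision protocol of class $c$: $\rho^c:\mathbb R^{n^c}\times X^c_{\mathcal U_D}\to\mathbb R^{n^c\times n^c}_{\ge0}$ with revision rate $R^c>0$; (A3): $\rho^c$ Lipschitz and $R^c\ge\sup_{\mu\in X}\sum_{v\ne u}\rho^c_{uv}(F^c(\mu),\mu^c[\mathcal S^c,\cdot])$ for all $u$. Excess payoff: $\rho^c_{uv}(F,\sigma)=\tau^c_v(\hat F)$ with $\hat F=F-\mathbf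 1F^\top\sigma/m^c$ and $\tau^c:\mathbb R^{n^c}\to\mathbb R^{n^c}_{\ge0}$ Lipschitz with $\hat F\notin\mathbb R^{n^c}_{\le0}\Rightarrow\tau^c(\hat F)^\top\hat F>0$; pairwise comparison: $\rho^c_{uv}(F,\sigma)=\tau^c_{uv}(F)$ with $\tau^c$ Lipschitz, nonnegative and $\mathrm{sign}(\tau^c_{uv}(F))=\mathrm{sign}(\max(0,F_v-F_u))$. Master equation vector fields: $f^{c,d}_{s,u}(\mu)=\lambda^c\sum_{s'}\sum_{a'\in\mathcal A^c(s')}\phi^c(s\mid s',a')u(a'\mid s')\mu^c[s',u]-\lambda^c\mu^c[s,u]$; $f^{c,r}_{s,u}(\mu)=\sum_{u'}\mu^c[s,u']\rho^c_{u'u}(F^c(\mu),\mu^c[\mathcal S^c,\cdot])-\mu^c[s,u]\sum_{u'}\rho^c_{uu'}(F^c(\mu),\mu^c[\mathcal S^c,\cdot])$. *)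

theory Defs
  imports "HOL-Analysis.Analysis" "HOL-Library.FuncSet"
begin

(* Classes are the elements of a finite type 'c, states live in a finite type 's,
   actions in a finite type 'a.  Class c has state set S c, admissible actions A c s. *)

definition pol :: "('s \<Rightarrow> 'a) \<Rightarrow> 's \<Rightarrow> 'a \<Rightarrow> real" where
  "pol u s a = (if a = u s then 1 else 0)"

definition Pols :: "('c \<Rightarrow> 's set) \<Rightarrow> ('c \<Rightarrow> 's \<Rightarrow> 'a set) \<Rightarrow> 'c \<Rightarrow> ('s \<Rightarrow> 'a) set" where
  "Pols S A c = Pi\<^sub>E (S c) (A c)"

definition Aall :: "('c \<Rightarrow> 's set) \<Rightarrow> ('c \<Rightarrow> 's \<Rightarrow> 'a set) \<Rightarrow> 'c \<Rightarrow> 'a set" where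
  "Aall S A c = (\<Union>s\<in>S c. A c s)"

(* phi c s s' a = phi^c(s | s', a) *)
definition step_rel :: "('c \<Rightarrow> 's set) \<Rightarrow> ('c \<Rightarrow> 's \<Rightarrow> 's \<Rightarrow> 'a \<Rightarrow> real) \<Rightarrow> 'c \<Rightarrow> ('s \<Rightarrow> 'a) \<Rightarrow> ('s \<times> 's) set" where
  "step_rel S phi c u = {(s, t). s \<in> S c \<and> t \<in> S c \<and> phi c t s (u s) > 0}"

definition recurrent_state :: "('c \<Rightarrow> 's set) \<Rightarrow> ('c \<Rightarrow> 's \<Rightarrow> 's \<Rightarrow> 'a \<Rightarrow> real) \<Rightarrow> 'c \<Rightarrow> ('s \<Rightarrow> 'a) \<Rightarrow> 's \<Rightarrow> bool" where
  "recurrent_state S phi c u s \<longleftrightarrow> s \<in> S c \<and>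
     (\<forall>t. (s, t) \<in> (step_rel S phi c u)\<^sup>* \<longrightarrow> (t, s) \<in> (step_rel S phi c u)\<^sup>*)"

definition unique_recurrent_class :: "('c \<Rightarrow> 's set) \<Rightarrow> ('c \<Rightarrow> 's \<Rightarrow> 's \<Rightarrow> 'a \<Rightarrow> real) \<Rightarrow> 'c \<Rightarrow> ('s \<Rightarrow> 'a) \<Rightarrow> bool" where
  "unique_recurrent_class S phi c u \<longleftrightarrow>
     (\<exists>s. recurrent_state S phi c u s) \<and>
     (\<forall>s t. recurrent_state S phi c u s \<and> recurrent_state S phi c u t
            \<longrightarrow> (s, t) \<in> (step_rel S phi c u)\<^sup>*)"

(* stationary distribution of the CTMC with generator lam c (phi^{c,u} - I) *)
definition stat_dist :: "('c \<Rightarrow> 's set) \<Rightarrow> ('c \<Rightarrow> 's \<Rightarrow> 's \<Rightarrow> 'a \<Rightarrow> real) \<Rightarrow> ('c \<Rightarrow> real) \<Rightarrow> 'c \<Rightarrow> ('s \<Rightarrow> 'a) \<Rightarrow> ('s \<Rightarrow> real) \<Rightarrow> bool" where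
  "stat_dist S phi lam c u \<eta> \<longleftrightarrow>
     (\<forall>s. s \<notin> S c \<longrightarrow> \<eta> s = 0) \<and> (\<forall>s\<in>S c. \<eta> s \<ge> 0) \<and> sum \<eta> (S c) = 1 \<and>
     (\<forall>s\<in>S c. lam c * ((\<Sum>s'\<in>S c. phi c s s' (u s') * \<eta> s') - \<eta> s) = 0)"

definition eta :: "('c \<Rightarrow> 's set) \<Rightarrow> ('c \<Rightarrow> 's \<Rightarrow> 's \<Rightarrow> 'a \<Rightarrow> real) \<Rightarrow> ('c \<Rightarrow> real) \<Rightarrow> 'c \<Rightarrow> ('s \<Rightarrow> 'a) \<Rightarrow> 's \<Rightarrow> real" where
  "eta S phi lam c u = (THE \<eta>. stat_dist S phi lam c u \<eta>)"

(* population states mu c s u = mu^c[s,u] *)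
definition Xset :: "('c::finite \<Rightarrow> 's set) \<Rightarrow> ('c \<Rightarrow> 's \<Rightarrow> 'a set) \<Rightarrow> ('c \<Rightarrow> real) \<Rightarrow> ('c \<Rightarrow> 's \<Rightarrow> ('s \<Rightarrow> 'a) \<Rightarrow> real) set" where
  "Xset S A m = {mu. \<forall>c. (\<forall>s\<in>S c. \<forall>u\<in>Pols S A c. mu c s u \<ge> 0) \<and>
                        (\<Sum>s\<in>S c. \<Sum>u\<in>Pols S A c. mu c s u) = m c}"

(* coordinates of R^{pq} inside real^('c \<times> 's \<times> 'a) *)
definition Ipq :: "('c \<Rightarrow> 's set) \<Rightarrow> ('c \<Rightarrow> 's \<Rightarrow> 'a set) \<Rightarrow> ('c \<times> 's \<times> 'a) set" where
  "Ipq S A = {(c, s, a). s \<in> S c \<and> a \<in> Aall S A c}"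

definition Rpq_nonneg :: "('c::finite \<Rightarrow> 's::finite set) \<Rightarrow> ('c \<Rightarrow> 's \<Rightarrow> 'a::finite set) \<Rightarrow> (real ^ ('c \<times> 's \<times> 'a)) set" where
  "Rpq_nonneg S A = {x. \<forall>i. x $ i \<ge> 0 \<and> (i \<notin> Ipq S A \<longrightarrow> x $ i = 0)}"

definition XSA :: "('c::finite \<Rightarrow> 's::finite set) \<Rightarrow> ('c \<Rightarrow> 's \<Rightarrow> 'a::finite set) \<Rightarrow> ('c \<Rightarrow> real) \<Rightarrow> (real ^ ('c \<times> 's \<times> 'a)) set" where
  "XSA S A m = {x \<in> Rpq_nonneg S A. \<forall>c. (\<Sum>s\<in>S c. \<Sum>a\<in>Aall S A c. x $ (c, s, a)) = m c}"

definition muSA :: "('c::finite \<Rightarrow> 's::finite set) \<Rightarrow> ('c \<Rightarrow> 's \<Rightarrow> 'a::finite set) \<Rightarrow> ('c \<Rightarrow> 's \<Rightarrow> ('s \<Rightarrow> 'a) \<Rightarrow> real) \<Rightarrow> real ^ ('c \<times> 's \<times> 'a)" where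
  "muSA S A mu = (\<chi> i. case i of (c, s, a) \<Rightarrow> (if s \<in> S c \<and> a \<in> Aall S A c
                                 then (\<Sum>u\<in>Pols S A c. mu c s u * pol u s a) else 0))"

definition mass_pol :: "('c \<Rightarrow> 's set) \<Rightarrow> ('c \<Rightarrow> 's \<Rightarrow> ('s \<Rightarrow> 'a) \<Rightarrow> real) \<Rightarrow> 'c \<Rightarrow> ('s \<Rightarrow> 'a) \<Rightarrow> real" where
  "mass_pol S mu c u = (\<Sum>s\<in>S c. mu c s u)"

definition Fpay :: "('c::finite \<Rightarrow> 's::finite set) \<Rightarrow> ('c \<Rightarrow> 's \<Rightarrow> 'a::finite set) \<Rightarrow> ('c \<Rightarrow> 's \<Rightarrow> 's \<Rightarrow> 'a \<Rightarrow> real)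
     \<Rightarrow> ('c \<Rightarrow> real) \<Rightarrow> ('c \<Rightarrow> 's \<Rightarrow> 'a \<Rightarrow> real ^ ('c \<times> 's \<times> 'a) \<Rightarrow> real)
     \<Rightarrow> ('c \<Rightarrow> 's \<Rightarrow> ('s \<Rightarrow> 'a) \<Rightarrow> real) \<Rightarrow> 'c \<Rightarrow> ('s \<Rightarrow> 'a) \<Rightarrow> real" where
  "Fpay S A phi lam r mu c u =
     (\<Sum>s\<in>S c. \<Sum>a\<in>A c s. eta S phi lam c u s * pol u s a * r c s a (muSA S A mu))"

definition XU :: "('c \<Rightarrow> 's set) \<Rightarrow> ('c \<Rightarrow> 's \<Rightarrow> 'a set) \<Rightarrow> ('c \<Rightarrow> real) \<Rightarrow> 'c \<Rightarrow> (('s \<Rightarrow> 'a) \<Rightarrow> real) set" where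
  "XU S A m c = {\<sigma>. (\<forall>u\<in>Pols S A c. \<sigma> u \<ge> 0) \<and> sum \<sigma> (Pols S A c) = m c}"

definition A1 :: "('c::finite \<Rightarrow> 's::finite set) \<Rightarrow> ('c \<Rightarrow> 's \<Rightarrow> 'a::finite set) \<Rightarrow> ('c \<Rightarrow> real)
     \<Rightarrow> ('c \<Rightarrow> 's \<Rightarrow> 'a \<Rightarrow> real ^ ('c \<times> 's \<times> 'a) \<Rightarrow> real) \<Rightarrow> bool" where
  "A1 S A m r \<longleftrightarrow> (\<forall>c. \<forall>s\<in>S c. \<forall>a\<in>A c s.
     \<exists>g grad. (\<forall>x\<in>XSA S A m. g x = r c s a x) \<and>
       (\<forall>x\<in>XSA S A m. (g has_derivative (\<lambda>h. grad x \<bullet> h)) (at x within Rpq_nonneg S A)) \<and>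
       continuous_on (XSA S A m) grad)"

definition A2 :: "('c \<Rightarrow> 's set) \<Rightarrow> ('c \<Rightarrow> 's \<Rightarrow> 'a set) \<Rightarrow> ('c \<Rightarrow> 's \<Rightarrow> 's \<Rightarrow> 'a \<Rightarrow> real) \<Rightarrow> bool" where
  "A2 S A phi \<longleftrightarrow> (\<forall>c. \<forall>u\<in>Pols S A c. unique_recurrent_class S phi c u)"

(* revision protocols: rho c F sigma u v = rho^c_{uv}(F, sigma);
   vectors in R^{n^c} are functions on Pols S A c; Lipschitz w.r.t. the l1 norm *)
definition rho_lipschitz :: "('c \<Rightarrow> 's set) \<Rightarrow> ('c \<Rightarrow> 's \<Rightarrow> 'a set) \<Rightarrow> ('c \<Rightarrow> real)
     \<Rightarrow> ('c \<Rightarrow> (('s \<Rightarrow> 'a) \<Rightarrow> real) \<Rightarrow> (('s \<Rightarrow> 'a) \<Rightarrow> real) \<Rightarrow> ('s \<Rightarrow> 'a) \<Rightarrow> ('s \<Rightarrow> 'a) \<Rightarrow> real) \<Rightarrow> 'c \<Rightarrow> bool" where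
  "rho_lipschitz S A m rho c \<longleftrightarrow> (\<exists>L. \<forall>F F' \<sigma> \<sigma>'. \<sigma> \<in> XU S A m c \<longrightarrow> \<sigma>' \<in> XU S A m c \<longrightarrow>
     (\<forall>u\<in>Pols S A c. \<forall>v\<in>Pols S A c.
        \<bar>rho c F \<sigma> u v - rho c F' \<sigma>' u v\<bar>
          \<le> L * ((\<Sum>w\<in>Pols S A c. \<bar>F w - F' w\<bar>) + (\<Sum>w\<in>Pols S A c. \<bar>\<sigma> w - \<sigma>' w\<bar>))))"

definition rho_nonneg :: "('c \<Rightarrow> 's set) \<Rightarrow> ('c \<Rightarrow> 's \<Rightarrow> 'a set) \<Rightarrow> ('c \<Rightarrow> real)
     \<Rightarrow> ('c \<Rightarrow> (('s \<Rightarrow> 'a) \<Rightarrow> real) \<Rightarrow> (('s \<Rightarrow> 'a) \<Rightarrow> real) \<Rightarrow> ('s \<Rightarrow> 'a) \<Rightarrow> ('s \<Rightarrow> 'a) \<Rightarrow> real) \<Rightarrow> 'c \<Rightarrow> bool" where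
  "rho_nonneg S A m rho c \<longleftrightarrow> (\<forall>F \<sigma>. \<sigma> \<in> XU S A m c \<longrightarrow>
     (\<forall>u\<in>Pols S A c. \<forall>v\<in>Pols S A c. rho c F \<sigma> u v \<ge> 0))"

definition A3 :: "('c::finite \<Rightarrow> 's::finite set) \<Rightarrow> ('c \<Rightarrow> 's \<Rightarrow> 'a::finite set) \<Rightarrow> ('c \<Rightarrow> 's \<Rightarrow> 's \<Rightarrow> 'a \<Rightarrow> real)
     \<Rightarrow> ('c \<Rightarrow> real) \<Rightarrow> ('c \<Rightarrow> real) \<Rightarrow> ('c \<Rightarrow> 's \<Rightarrow> 'a \<Rightarrow> real ^ ('c \<times> 's \<times> 'a) \<Rightarrow> real)
     \<Rightarrow> ('c \<Rightarrow> (('s \<Rightarrow> 'a) \<Rightarrow> real) \<Rightarrow> (('s \<Rightarrow> 'a) \<Rightarrow> real) \<Rightarrow> ('s \<Rightarrow> 'a) \<Rightarrow> ('s \<Rightarrow> 'a) \<Rightarrow> real)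
     \<Rightarrow> ('c \<Rightarrow> real) \<Rightarrow> bool" where
  "A3 S A phi lam m r rho R \<longleftrightarrow> (\<forall>c. rho_lipschitz S A m rho c \<and>
     (\<forall>mu\<in>Xset S A m. \<forall>u\<in>Pols S A c.
        (\<Sum>v\<in>Pols S A c - {u}. rho c (Fpay S A phi lam r mu c) (mass_pol S mu c) u v) \<le> R c))"

definition excess_payoff_protocol :: "('c \<Rightarrow> 's set) \<Rightarrow> ('c \<Rightarrow> 's \<Rightarrow> 'a set) \<Rightarrow> ('c \<Rightarrow> real)
     \<Rightarrow> ('c \<Rightarrow> (('s \<Rightarrow> 'a) \<Rightarrow> real) \<Rightarrow> (('s \<Rightarrow> 'a) \<Rightarrow> real) \<Rightarrow> ('s \<Rightarrow> 'a) \<Rightarrow> ('s \<Rightarrow> 'a) \<Rightarrow> real) \<Rightarrow> 'c \<Rightarrow> bool" where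
  "excess_payoff_protocol S A m rho c \<longleftrightarrow> (\<exists>\<tau> :: (('s \<Rightarrow> 'a) \<Rightarrow> real) \<Rightarrow> ('s \<Rightarrow> 'a) \<Rightarrow> real.
     (\<forall>F \<sigma>. \<sigma> \<in> XU S A m c \<longrightarrow> (\<forall>u\<in>Pols S A c. \<forall>v\<in>Pols S A c.
        rho c F \<sigma> u v = \<tau> (\<lambda>w. F w - (\<Sum>w'\<in>Pols S A c. F w' * \<sigma> w') / m c) v)) \<and>
     (\<exists>L. \<forall>G G'. \<forall>v\<in>Pols S A c. \<bar>\<tau> G v - \<tau> G' v\<bar> \<le> L * (\<Sum>w\<in>Pols S A c. \<bar>G w - G' w\<bar>)) \<and>
     (\<forall>G. \<forall>v\<in>Pols S A c. \<tau> G v \<ge> 0) \<and>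
     (\<forall>G. (\<exists>v\<in>Pols S A c. G v > 0) \<longrightarrow> (\<Sum>v\<in>Pols S A c. \<tau> G v * G v) > 0))"

definition pairwise_comparison_protocol :: "('c \<Rightarrow> 's set) \<Rightarrow> ('c \<Rightarrow> 's \<Rightarrow> 'a set) \<Rightarrow> ('c \<Rightarrow> real)
     \<Rightarrow> ('c \<Rightarrow> (('s \<Rightarrow> 'a) \<Rightarrow> real) \<Rightarrow> (('s \<Rightarrow> 'a) \<Rightarrow> real) \<Rightarrow> ('s \<Rightarrow> 'a) \<Rightarrow> ('s \<Rightarrow> 'a) \<Rightarrow> real) \<Rightarrow> 'c \<Rightarrow> bool" where
  "pairwise_comparison_protocol S A m rho c \<longleftrightarrow> (\<exists>\<tau> :: (('s \<Rightarrow> 'a) \<Rightarrow> real) \<Rightarrow> ('s \<Rightarrow> 'a) \<Rightarrow> ('s \<Rightarrow> 'a) \<Rightarrow> real.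
     (\<forall>F \<sigma>. \<sigma> \<in> XU S A m c \<longrightarrow> (\<forall>u\<in>Pols S A c. \<forall>v\<in>Pols S A c. rho c F \<sigma> u v = \<tau> F u v)) \<and>
     (\<exists>L. \<forall>G G'. \<forall>u\<in>Pols S A c. \<forall>v\<in>Pols S A c.
         \<bar>\<tau> G u v - \<tau> G' u v\<bar> \<le> L * (\<Sum>w\<in>Pols S A c. \<bar>G w - G' w\<bar>)) \<and>
     (\<forall>G. \<forall>u\<in>Pols S A c. \<forall>v\<in>Pols S A c. \<tau> G u v \<ge> 0 \<and> sgn (\<tau> G u v) = sgn (max 0 (G v - G u))))"

definition fd :: "('c \<Rightarrow> 's set) \<Rightarrow> ('c \<Rightarrow> 's \<Rightarrow> 'a set) \<Rightarrow> ('c \<Rightarrow> 's \<Rightarrow> 's \<Rightarrow> 'a \<Rightarrow> real) \<Rightarrow> ('c \<Rightarrow> real)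
     \<Rightarrow> ('c \<Rightarrow> 's \<Rightarrow> ('s \<Rightarrow> 'a) \<Rightarrow> real) \<Rightarrow> 'c \<Rightarrow> 's \<Rightarrow> ('s \<Rightarrow> 'a) \<Rightarrow> real" where
  "fd S A phi lam mu c s u =
     lam c * (\<Sum>s'\<in>S c. \<Sum>a'\<in>A c s'. phi c s s' a' * pol u s' a' * mu c s' u) - lam c * mu c s u"

definition fr :: "('c::finite \<Rightarrow> 's::finite set) \<Rightarrow> ('c \<Rightarrow> 's \<Rightarrow> 'a::finite set) \<Rightarrow> ('c \<Rightarrow> 's \<Rightarrow> 's \<Rightarrow> 'a \<Rightarrow> real)
     \<Rightarrow> ('c \<Rightarrow> real) \<Rightarrow> ('c \<Rightarrow> 's \<Rightarrow> 'a \<Rightarrow> real ^ ('c \<times> 's \<times> 'a) \<Rightarrow> real)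
     \<Rightarrow> ('c \<Rightarrow> (('s \<Rightarrow> 'a) \<Rightarrow> real) \<Rightarrow> (('s \<Rightarrow> 'a) \<Rightarrow> real) \<Rightarrow> ('s \<Rightarrow> 'a) \<Rightarrow> ('s \<Rightarrow> 'a) \<Rightarrow> real)
     \<Rightarrow> ('c \<Rightarrow> 's \<Rightarrow> ('s \<Rightarrow> 'a) \<Rightarrow> real) \<Rightarrow> 'c \<Rightarrow> 's \<Rightarrow> ('s \<Rightarrow> 'a) \<Rightarrow> real" where
  "fr S A phi lam r rho mu c s u =
     (\<Sum>u'\<in>Pols S A c. mu c s u' * rho c (Fpay S A phi lam r mu c) (mass_pol S mu c) u' u)
     - mu c s u * (\<Sum>u'\<in>Pols S A c. rho c (Fpay S A phi lam r mu c) (mass_pol S mu c) u u')"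

definition MSNE :: "('c::finite \<Rightarrow> 's::finite set) \<Rightarrow> ('c \<Rightarrow> 's \<Rightarrow> 'a::finite set) \<Rightarrow> ('c \<Rightarrow> 's \<Rightarrow> 's \<Rightarrow> 'a \<Rightarrow> real)
     \<Rightarrow> ('c \<Rightarrow> real) \<Rightarrow> ('c \<Rightarrow> real) \<Rightarrow> ('c \<Rightarrow> 's \<Rightarrow> 'a \<Rightarrow> real ^ ('c \<times> 's \<times> 'a) \<Rightarrow> real)
     \<Rightarrow> ('c \<Rightarrow> 's \<Rightarrow> ('s \<Rightarrow> 'a) \<Rightarrow> real) \<Rightarrow> bool" where
  "MSNE S A phi lam m r mu \<longleftrightarrow> mu \<in> Xset S A m \<and>
     (\<forall>c. \<forall>u\<in>Pols S A c.
        (mass_pol S mu c u > 0 \<longrightarrow> (\<forall>v\<in>Pols S A c. Fpay S A phi lam r mu c u \<ge> Fpay S A phi lam r mu c v)) \<and>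
        (\<forall>s\<in>S c. mu c s u = eta S phi lam c u s * mass_pol S mu c u))"

end

theory Submission
  imports Defs
begin

lemma stat_closed:
  assumes nn: "\<forall>s\<in>S c. w s \<ge> (0::real)"
    and st: "\<forall>t\<in>S c. w t = (\<Sum>s\<in>S c. phi c t s (u s) * w s)"
    and pn: "\<forall>s\<in>S c. \<forall>t\<in>S c. phi c t s (u s) \<ge> 0"
    and fin: "finite (S c)"
    and R: "(s, t) \<in> (step_rel S phi c u)\<^sup>*" and ws: "w s > 0"
  shows "w t > 0"
  using R
proof (induction rule: rtrancl_induct)
  case base then show ?case using ws .
next
  case (step y z)
  then have y: "y \<in> S c" and z: "z \<in> S c" and p: "phi c z y (u y) > 0"
    by (auto simp: step_rel_def)
  have "phi c z y (u y) * w y \<le> (\<Sum>s\<in>S c. phi c z s (u s) * w s)"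
    by (rule member_le_sum) (use y z pn nn fin in auto)
  moreover have "phi c z y (u y) * w y > 0" using p step.IH by simp
  ultimately show ?case using st z by simp
qed

lemma recurrent_in_supp:
  assumes nn: "\<forall>s\<in>S c. w s \<ge> (0::real)"
    and st: "\<forall>t\<in>S c. w t = (\<Sum>s\<in>S c. phi c t s (u s) * w s)"
    and pn: "\<forall>s\<in>S c. \<forall>t\<in>S c. phi c t s (u s) \<ge> 0"
    and fin: "finite (S c)"
    and ex: "\<exists>s\<in>S c. w s > 0"
  shows "\<exists>s. recurrent_state S phi c u s \<and> w s > 0"
proof -
  let ?R = "(step_rel S phi c u)\<^sup>*"
  define reach where "reach s = ?R `` {s}" for s
  obtain s0 where s0: "s0 \<in> S c \<and> w s0 > 0"
    and mn: "\<forall>y. y \<in> S c \<and> w y > 0 \<longrightarrow> card (reach s0) \<le> card (reach y)"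
    using ex_has_least_nat[of "\<lambda>s. s \<in> S c \<and> w s > 0" _ "\<lambda>s. card (reach s)"] ex by blast
  have finr: "finite (reach s)" for s
  proof -
    have "reach s \<subseteq> insert s (S c)"
    proof
      fix t assume "t \<in> reach s"
      then have "(s, t) \<in> ?R" by (simp add: reach_def)
      then show "t \<in> insert s (S c)"
        by (induction rule: rtrancl_induct) (auto simp: step_rel_def)
    qed
    then show ?thesis using fin finite_subset by blast
  qed
  have "recurrent_state S phi c u s0"
    unfolding recurrent_state_def
  proof (intro conjI allI impI)
    show "s0 \<in> S c" using s0 by simp
    fix t assume t: "(s0, t) \<in> ?R"
    have wt: "w t > 0" using stat_closed[OF nn st pn fin t] s0 by simp
    have tS: "t \<in> S c"
    proof (cases "t = s0")
      case True then show ?thesis using s0 by simp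
    next
      case False
      then obtain y where "(y, t) \<in> step_rel S phi c u" using t
        by (metis rtranclE)
      then show ?thesis by (simp add: step_rel_def)
    qed
    have sub: "reach t \<subseteq> reach s0" using t by (auto simp: reach_def)
    have "card (reach s0) \<le> card (reach t)" using mn wt tS by blast
    moreover have "card (reach t) \<le> card (reach s0)" using card_mono[OF finr sub] .
    ultimately have "card (reach t) = card (reach s0)" by (rule antisym[rotated])
    then have "reach t = reach s0" using card_subset_eq[OF finr sub] by blast
    moreover have "s0 \<in> reach s0" by (simp add: reach_def)
    ultimately have "s0 \<in> reach t" by simp
    then show "(t, s0) \<in> ?R" unfolding reach_def by blast
  qed
  then show ?thesis using s0 by blast
qed

lemma stat_unique:
  assumes U: "unique_recurrent_class S phi c u"
    and pn: "\<forall>s\<in>S c. \<forall>t\<in>S c. phi c t s (u s) \<ge> 0"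
    and ps: "\<forall>s\<in>S c. (\<Sum>t\<in>S c. phi c t s (u s)) = 1"
    and fin: "finite (S c)"
    and lp: "lam c > 0"
    and x: "stat_dist S phi lam c u x" and y: "stat_dist S phi lam c u y"
  shows "x = y"
proof -
  have stx: "\<forall>t\<in>S c. x t = (\<Sum>s\<in>S c. phi c t s (u s) * x s)"
    using x lp unfolding stat_dist_def by auto
  have sty: "\<forall>t\<in>S c. y t = (\<Sum>s\<in>S c. phi c t s (u s) * y s)"
    using y lp unfolding stat_dist_def by auto
  define z where "z s = x s - y s" for s
  have stz: "\<forall>t\<in>S c. z t = (\<Sum>s\<in>S c. phi c t s (u s) * z s)"
    using stx sty by (simp add: z_def right_diff_distrib sum_subtractf)
  define q where "q t = (\<Sum>s\<in>S c. phi c t s (u s) * \<bar>z s\<bar>) - \<bar>z t\<bar>" for t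
  have q0: "q t \<ge> 0" if t: "t \<in> S c" for t
  proof -
    have "\<bar>z t\<bar> = \<bar>\<Sum>s\<in>S c. phi c t s (u s) * z s\<bar>" using stz t by simp
    also have "\<dots> \<le> (\<Sum>s\<in>S c. \<bar>phi c t s (u s) * z s\<bar>)" by (rule sum_abs)
    also have "\<dots> = (\<Sum>s\<in>S c. phi c t s (u s) * \<bar>z s\<bar>)"
      by (rule sum.cong) (use pn t in \<open>auto simp: abs_mult\<close>)
    finally show ?thesis by (simp add: q_def)
  qed
  have "(\<Sum>t\<in>S c. q t) = (\<Sum>t\<in>S c. \<Sum>s\<in>S c. phi c t s (u s) * \<bar>z s\<bar>) - (\<Sum>t\<in>S c. \<bar>z t\<bar>)"
    by (simp add: q_def sum_subtractf)
  also have "(\<Sum>t\<in>S c. \<Sum>s\<in>S c. phi c t s (u s) * \<bar>z s\<bar>) = (\<Sum>s\<in>S c. (\<Sum>t\<in>S c. phi c t s (u s)) * \<bar>z s\<bar>)"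
    by (subst sum.swap) (simp add: sum_distrib_right)
  also have "\<dots> = (\<Sum>s\<in>S c. \<bar>z s\<bar>)" using ps by simp
  finally have "(\<Sum>t\<in>S c. q t) = 0" by simp
  then have qz: "\<forall>t\<in>S c. q t = 0" using sum_nonneg_eq_0_iff[OF fin] q0 by blast
  have sta: "\<forall>t\<in>S c. \<bar>z t\<bar> = (\<Sum>s\<in>S c. phi c t s (u s) * \<bar>z s\<bar>)"
    using qz by (simp add: q_def)
  define zp where "zp s = (\<bar>z s\<bar> + z s) / 2" for s
  define zm where "zm s = (\<bar>z s\<bar> - z s) / 2" for s
  have stp: "\<forall>t\<in>S c. zp t = (\<Sum>s\<in>S c. phi c t s (u s) * zp s)"
  proof
    fix t assume t: "t \<in> S c"
    have "(\<Sum>s\<in>S c. phi c t s (u s) * zp s) = ((\<Sum>s\<in>S c. phi c t s (u s) * \<bar>z s\<bar>) + (\<Sum>s\<in>S c. phi c t s (u s) * z s)) / 2"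
      by (simp add: zp_def sum_divide_distrib distrib_left sum.distrib add_divide_distrib)
    also have "\<dots> = zp t" using bspec[OF sta t] bspec[OF stz t] unfolding zp_def by metis
    finally show "zp t = (\<Sum>s\<in>S c. phi c t s (u s) * zp s)" by simp
  qed
  have stm: "\<forall>t\<in>S c. zm t = (\<Sum>s\<in>S c. phi c t s (u s) * zm s)"
  proof
    fix t assume t: "t \<in> S c"
    have "(\<Sum>s\<in>S c. phi c t s (u s) * zm s) = ((\<Sum>s\<in>S c. phi c t s (u s) * \<bar>z s\<bar>) - (\<Sum>s\<in>S c. phi c t s (u s) * z s)) / 2"
      by (simp add: zm_def sum_divide_distrib right_diff_distrib sum_subtractf diff_divide_distrib)
    also have "\<dots> = zm t" using bspec[OF sta t] bspec[OF stz t] unfolding zm_def by metis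
    finally show "zm t = (\<Sum>s\<in>S c. phi c t s (u s) * zm s)" by simp
  qed
  have np: "\<forall>s\<in>S c. zp s \<ge> 0" by (simp add: zp_def abs_if)
  have nm: "\<forall>s\<in>S c. zm s \<ge> 0" by (simp add: zm_def abs_if)
  have "(\<forall>s\<in>S c. zp s \<le> 0) \<or> (\<forall>s\<in>S c. zm s \<le> 0)"
  proof (rule ccontr)
    assume "\<not> ?thesis"
    then have e1: "\<exists>s\<in>S c. zp s > 0" and e2: "\<exists>s\<in>S c. zm s > 0" by (auto simp: not_le)
    obtain r1 where r1: "recurrent_state S phi c u r1" "zp r1 > 0"
      using recurrent_in_supp[of S c zp phi u, OF np stp pn fin e1] by blast
    obtain r2 where r2: "recurrent_state S phi c u r2" "zm r2 > 0"
      using recurrent_in_supp[of S c zm phi u, OF nm stm pn fin e2] by blast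
    have "(r2, r1) \<in> (step_rel S phi c u)\<^sup>*" using U r1 r2 unfolding unique_recurrent_class_def by blast
    then have "zm r1 > 0" using stat_closed[of S c zm phi u, OF nm stm pn fin _ r2(2)] by blast
    with r1(2) show False by (simp add: zp_def zm_def abs_if split: if_splits)
  qed
  then have sgn: "(\<forall>s\<in>S c. z s \<le> 0) \<or> (\<forall>s\<in>S c. z s \<ge> 0)"
    by (auto simp: zp_def zm_def abs_if split: if_splits)
  have sz: "(\<Sum>s\<in>S c. z s) = 0" using x y by (simp add: z_def sum_subtractf stat_dist_def)
  have "\<forall>s\<in>S c. z s = 0"
  proof (cases "\<forall>s\<in>S c. z s \<ge> 0")
    case True then show ?thesis using sum_nonneg_eq_0_iff[OF fin] sz by blast
  next
    case False
    then have "\<forall>s\<in>S c. - z s \<ge> 0" using sgn by auto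
    moreover have "(\<Sum>s\<in>S c. - z s) = 0" using sz by (simp add: sum_negf)
    ultimately show ?thesis using sum_nonneg_eq_0_iff[OF fin, of "\<lambda>s. - z s"] by auto
  qed
  then show ?thesis using x y unfolding stat_dist_def z_def by (metis eq_iff_diff_eq_0 ext)
qed

lemma perturb_contra:
  fixes U :: "'u set" and \<tau> :: "('u \<Rightarrow> real) \<Rightarrow> 'u \<Rightarrow> real" and G :: "'u \<Rightarrow> real"
  assumes finU: "finite U"
    and lip: "\<exists>L. \<forall>G G'. \<forall>v\<in>U. \<bar>\<tau> G v - \<tau> G' v\<bar> \<le> L * (\<Sum>w\<in>U. \<bar>G w - G' w\<bar>)"
    and tnn: "\<forall>G. \<forall>v\<in>U. \<tau> G v \<ge> 0"
    and tpos: "\<forall>G. (\<exists>v\<in>U. G v > 0) \<longrightarrow> (\<Sum>v\<in>U. \<tau> G v * G v) > 0"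
    and Gle: "\<forall>x\<in>U. G x \<le> 0"
    and w: "w \<in> U" and v: "v \<in> U" and wv: "w \<noteq> v" and Gw: "G w = 0" and Gv: "G v = 0"
    and bpos: "\<tau> G v > 0"
  shows False
proof -
  obtain L where L: "\<forall>G G'. \<forall>v\<in>U. \<bar>\<tau> G v - \<tau> G' v\<bar> \<le> L * (\<Sum>w\<in>U. \<bar>G w - G' w\<bar>)"
    using lip by blast
  define a where "a = \<tau> G w"
  define b where "b = \<tau> G v"
  have a0: "a \<ge> 0" using tnn w by (simp add: a_def)
  have b0: "b > 0" using bpos by (simp add: b_def)
  define K where "K = 2 * (a + 1) / b"
  have K0: "K > 0" using a0 b0 by (simp add: K_def)
  define d where "d = min 1 (b / 2)"
  have d0: "d > 0" using b0 by (simp add: d_def)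
  define e where "e = d / ((1 + \<bar>L\<bar>) * (1 + K))"
  have den: "(1 + \<bar>L\<bar>) * (1 + K) > 0" using K0 by (simp add: add_pos_nonneg)
  have e0: "e > 0" using d0 den by (simp add: e_def)
  have ed: "(1 + \<bar>L\<bar>) * (1 + K) * e = d" using den unfolding e_def by (metis less_irrefl nonzero_mult_div_cancel_left times_divide_eq_right)
  define G' where "G' = G(w := e, v := - K * e)"
  have G'w: "G' w = e" using wv by (simp add: G'_def)
  have G'v: "G' v = - K * e" by (simp add: G'_def)
  have G'o: "G' x = G x" if "x \<in> U - {w, v}" for x using that by (simp add: G'_def)
  have split: "(\<Sum>x\<in>U. f x) = f w + f v + (\<Sum>x\<in>U - {w, v}. f x)" for f :: "'u \<Rightarrow> real"
  proof -
    have "(\<Sum>x\<in>U. f x) = f w + (\<Sum>x\<in>U - {w}. f x)" using sum.remove[OF finU w] .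
    also have "(\<Sum>x\<in>U - {w}. f x) = f v + (\<Sum>x\<in>U - {w} - {v}. f x)"
      using sum.remove[of "U - {w}" v f] finU v wv by simp
    also have "U - {w} - {v} = U - {w, v}" by auto
    finally show ?thesis by simp
  qed
  have dist: "(\<Sum>x\<in>U. \<bar>G x - G' x\<bar>) = (1 + K) * e"
  proof -
    have "(\<Sum>x\<in>U - {w, v}. \<bar>G x - G' x\<bar>) = 0" using G'o by simp
    then show ?thesis using split[of "\<lambda>x. \<bar>G x - G' x\<bar>"] G'w G'v Gw Gv e0 K0
      by (simp add: algebra_simps)
  qed
  have Lb: "L * ((1 + K) * e) \<le> d"
  proof -
    have "L * ((1 + K) * e) \<le> \<bar>L\<bar> * ((1 + K) * e)"
      using K0 e0 by (intro mult_right_mono) auto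
    also have "\<dots> \<le> (1 + \<bar>L\<bar>) * ((1 + K) * e)"
      using K0 e0 by (intro mult_right_mono) auto
    finally show ?thesis using ed by (simp add: mult.assoc)
  qed
  have tw: "\<tau> G' w \<le> a + 1"
  proof -
    have "\<bar>\<tau> G' w - \<tau> G w\<bar> \<le> L * (\<Sum>x\<in>U. \<bar>G' x - G x\<bar>)" using L w by blast
    also have "(\<Sum>x\<in>U. \<bar>G' x - G x\<bar>) = (\<Sum>x\<in>U. \<bar>G x - G' x\<bar>)" by (simp add: abs_minus_commute)
    finally have "\<bar>\<tau> G' w - \<tau> G w\<bar> \<le> d" using dist Lb by simp
    moreover have "d \<le> 1" by (simp add: d_def)
    ultimately show ?thesis by (simp add: a_def)
  qed
  have tv: "\<tau> G' v \<ge> b / 2"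
  proof -
    have "\<bar>\<tau> G' v - \<tau> G v\<bar> \<le> L * (\<Sum>x\<in>U. \<bar>G' x - G x\<bar>)" using L v by blast
    also have "(\<Sum>x\<in>U. \<bar>G' x - G x\<bar>) = (\<Sum>x\<in>U. \<bar>G x - G' x\<bar>)" by (simp add: abs_minus_commute)
    finally have "\<bar>\<tau> G' v - \<tau> G v\<bar> \<le> d" using dist Lb by simp
    moreover have "d \<le> b / 2" by (simp add: d_def)
    ultimately show ?thesis by (simp add: b_def)
  qed
  have "(\<Sum>x\<in>U. \<tau> G' x * G' x) > 0" using tpos w G'w e0 by auto
  moreover have "(\<Sum>x\<in>U. \<tau> G' x * G' x) \<le> 0"
  proof -
    have r: "(\<Sum>x\<in>U - {w, v}. \<tau> G' x * G' x) \<le> 0"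
      by (rule sum_nonpos) (use G'o tnn Gle in \<open>auto intro: mult_nonneg_nonpos\<close>)
    have t1: "\<tau> G' w * e \<le> (a + 1) * e" using tw e0 by (intro mult_right_mono) auto
    have t2: "(b / 2) * (K * e) \<le> \<tau> G' v * (K * e)" using tv e0 K0 by (intro mult_right_mono) auto
    have t3: "(b / 2) * (K * e) = (a + 1) * e" using b0 by (simp add: K_def)
    have sp: "(\<Sum>x\<in>U. \<tau> G' x * G' x) = \<tau> G' w * e - \<tau> G' v * (K * e) + (\<Sum>x\<in>U - {w, v}. \<tau> G' x * G' x)"
      using split[of "\<lambda>x. \<tau> G' x * G' x"] G'w G'v by simp
    show ?thesis using sp r t1 t2 t3 by linarith
  qed
  ultimately show False by simp
qed

lemma zero_mass:
  fixes M :: "'s \<Rightarrow> 'u \<Rightarrow> real"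
  assumes finS: "finite SS" and "\<forall>s\<in>SS. M s u \<ge> 0" and "(\<Sum>s\<in>SS. M s u) = 0" and "s \<in> SS"
  shows "M s u = 0"
  using assms sum_nonneg_eq_0_iff[OF finS, of "\<lambda>s. M s u"] by blast

lemma excess_case:
  fixes U :: "'u set" and \<sigma> F :: "'u \<Rightarrow> real" and \<tau> :: "('u \<Rightarrow> real) \<Rightarrow> 'u \<Rightarrow> real"
    and \<rho> :: "'u \<Rightarrow> 'u \<Rightarrow> real" and M :: "'s \<Rightarrow> 'u \<Rightarrow> real" and SS :: "'s set" and m :: real
  assumes finU: "finite U" and finS: "finite SS" and mpos: "m > 0"
    and sig_nn: "\<forall>u\<in>U. \<sigma> u \<ge> 0" and sig_sum: "sum \<sigma> U = m"
    and rho_eq: "\<forall>u\<in>U. \<forall>v\<in>U. \<rho> u v = \<tau> (\<lambda>w. F w - (\<Sum>w'\<in>U. F w' * \<sigma> w') / m) v"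
    and lip: "\<exists>L. \<forall>G G'. \<forall>v\<in>U. \<bar>\<tau> G v - \<tau> G' v\<bar> \<le> L * (\<Sum>w\<in>U. \<bar>G w - G' w\<bar>)"
    and tnn: "\<forall>G. \<forall>v\<in>U. \<tau> G v \<ge> 0"
    and tpos: "\<forall>G. (\<exists>v\<in>U. G v > 0) \<longrightarrow> (\<Sum>v\<in>U. \<tau> G v * G v) > 0"
    and agg: "\<forall>u\<in>U. (\<Sum>u'\<in>U. \<sigma> u' * \<rho> u' u) - \<sigma> u * (\<Sum>u'\<in>U. \<rho> u u') = 0"
    and M_nn: "\<forall>s\<in>SS. \<forall>u\<in>U. M s u \<ge> 0" and M_sig: "\<forall>u\<in>U. \<sigma> u = (\<Sum>s\<in>SS. M s u)"
  shows "(\<forall>u\<in>U. \<sigma> u > 0 \<longrightarrow> (\<forall>v\<in>U. F v \<le> F u)) \<and>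
         (\<forall>s\<in>SS. \<forall>u\<in>U. (\<Sum>u'\<in>U. M s u' * \<rho> u' u) - M s u * (\<Sum>u'\<in>U. \<rho> u u') = 0)"
proof -
  define avg where "avg = (\<Sum>w'\<in>U. F w' * \<sigma> w') / m"
  define G where "G = (\<lambda>w. F w - avg)"
  define t where "t v = \<tau> G v" for v
  define T where "T = (\<Sum>v\<in>U. t v)"
  have rho_t: "\<forall>u\<in>U. \<forall>v\<in>U. \<rho> u v = t v" using rho_eq by (simp add: t_def G_def avg_def)
  have mt: "m * t u = \<sigma> u * T" if u: "u \<in> U" for u
  proof -
    have "(\<Sum>u'\<in>U. \<sigma> u' * \<rho> u' u) = (\<Sum>u'\<in>U. \<sigma> u' * t u)" using rho_t u by simp
    also have "\<dots> = m * t u" using sig_sum by (simp add: sum_distrib_right[symmetric])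
    finally have 1: "(\<Sum>u'\<in>U. \<sigma> u' * \<rho> u' u) = m * t u" .
    have 2: "(\<Sum>u'\<in>U. \<rho> u u') = T" using rho_t u by (simp add: T_def)
    show ?thesis using agg u 1 2 by simp
  qed
  have tT: "t u = \<sigma> u * T / m" if "u \<in> U" for u using mt[OF that] mpos by (simp add: field_simps)
  have sG: "(\<Sum>v\<in>U. \<sigma> v * G v) = 0"
  proof -
    have "(\<Sum>v\<in>U. \<sigma> v * G v) = (\<Sum>v\<in>U. F v * \<sigma> v) - avg * m"
      by (simp add: G_def right_diff_distrib sum_subtractf mult.commute sum_distrib_left[symmetric] sig_sum)
    then show ?thesis using mpos by (simp add: avg_def)
  qed
  have Gle: "\<forall>v\<in>U. G v \<le> 0"
  proof (rule ccontr)
    assume "\<not> ?thesis"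
    then have "\<exists>v\<in>U. G v > 0" by (auto simp: not_le)
    then have "(\<Sum>v\<in>U. \<tau> G v * G v) > 0" using tpos by blast
    moreover have "(\<Sum>v\<in>U. \<tau> G v * G v) = (\<Sum>v\<in>U. (T / m) * (\<sigma> v * G v))"
      by (rule sum.cong) (auto simp: t_def[symmetric] tT)
    moreover have "(\<Sum>v\<in>U. (T / m) * (\<sigma> v * G v)) = (T / m) * (\<Sum>v\<in>U. \<sigma> v * G v)"
      by (rule sum_distrib_left[symmetric])
    ultimately show False using sG by (simp only:)
  qed
  have supp0: "G u = 0" if u: "u \<in> U" and su: "\<sigma> u > 0" for u
  proof -
    have "(\<Sum>v\<in>U. - (\<sigma> v * G v)) = 0" using sG by (simp add: sum_negf)
    moreover have "\<forall>v\<in>U. - (\<sigma> v * G v) \<ge> 0" using Gle sig_nn by (auto intro: mult_nonneg_nonpos)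
    ultimately have "- (\<sigma> u * G u) = 0" using sum_nonneg_eq_0_iff[OF finU, of "\<lambda>v. - (\<sigma> v * G v)"] u by blast
    then show ?thesis using su by simp
  qed
  have NE: "\<forall>u\<in>U. \<sigma> u > 0 \<longrightarrow> (\<forall>v\<in>U. F v \<le> F u)"
    using supp0 Gle by (auto simp: G_def)
  have Mz: "M s u = 0" if "s \<in> SS" "u \<in> U" "\<sigma> u = 0" for s u
    using zero_mass[OF finS, of M u s] M_nn M_sig that by auto
  have fr0: "(\<Sum>u'\<in>U. M s u' * \<rho> u' u) - M s u * (\<Sum>u'\<in>U. \<rho> u u') = 0"
    if s: "s \<in> SS" and u: "u \<in> U" for s u
  proof -
    have e1: "(\<Sum>u'\<in>U. M s u' * \<rho> u' u) = (\<Sum>u'\<in>U. M s u') * t u"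
      using rho_t u by (simp add: sum_distrib_right)
    have e2: "(\<Sum>u'\<in>U. \<rho> u u') = T" using rho_t u by (simp add: T_def)
    show ?thesis
    proof (cases "\<sigma> u = 0")
      case True
      then show ?thesis using e1 e2 tT[OF u] Mz[OF s u] by simp
    next
      case False
      then have su: "\<sigma> u > 0" using sig_nn u by auto
      show ?thesis
      proof (cases "T = 0")
        case True
        then show ?thesis using e1 e2 tT[OF u] by simp
      next
        case False
        have only: "\<sigma> w = 0" if w: "w \<in> U" "w \<noteq> u" for w
        proof (rule ccontr)
          assume "\<sigma> w \<noteq> 0"
          then have sw: "\<sigma> w > 0" using sig_nn w by auto
          have "T \<ge> 0" unfolding T_def t_def using tnn by (simp add: sum_nonneg)
          then have Tp: "T > 0" using False by simp
          have "t u > 0" using tT[OF u] su Tp mpos by simp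
          then show False
            using perturb_contra[OF finU lip tnn tpos Gle w(1) u w(2) supp0[OF w(1) sw] supp0[OF u su]]
            by (simp add: t_def)
        qed
        have "(\<Sum>u'\<in>U. M s u') = (\<Sum>u'\<in>U. if u' = u then M s u else 0)"
          by (rule sum.cong) (use Mz[OF s] only in auto)
        also have "\<dots> = M s u" using u finU by simp
        finally have a1: "(\<Sum>u'\<in>U. M s u') = M s u" .
        have "T = (\<Sum>u'\<in>U. if u' = u then t u else 0)"
          unfolding T_def by (rule sum.cong) (use tT only in auto)
        also have "\<dots> = t u" using u finU by simp
        finally have a2: "T = t u" .
        show ?thesis using e1 e2 a1 a2 by simp
      qed
    qed
  qed
  show ?thesis using NE fr0 by blast
qed

lemma pairwise_case:
  fixes U :: "'u set" and \<sigma> F :: "'u \<Rightarrow> real" and \<tau> :: "('u \<Rightarrow> real) \<Rightarrow> 'u \<Rightarrow> 'u \<Rightarrow> real"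
    and \<rho> :: "'u \<Rightarrow> 'u \<Rightarrow> real" and M :: "'s \<Rightarrow> 'u \<Rightarrow> real" and SS :: "'s set"
  assumes finU: "finite U" and finS: "finite SS"
    and sig_nn: "\<forall>u\<in>U. \<sigma> u \<ge> 0"
    and rho_eq: "\<forall>u\<in>U. \<forall>v\<in>U. \<rho> u v = \<tau> F u v"
    and tsg: "\<forall>G. \<forall>u\<in>U. \<forall>v\<in>U. \<tau> G u v \<ge> 0 \<and> sgn (\<tau> G u v) = sgn (max 0 (G v - G u))"
    and agg: "\<forall>u\<in>U. (\<Sum>u'\<in>U. \<sigma> u' * \<rho> u' u) - \<sigma> u * (\<Sum>u'\<in>U. \<rho> u u') = 0"
    and M_nn: "\<forall>s\<in>SS. \<forall>u\<in>U. M s u \<ge> 0" and M_sig: "\<forall>u\<in>U. \<sigma> u = (\<Sum>s\<in>SS. M s u)"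
  shows "(\<forall>u\<in>U. \<sigma> u > 0 \<longrightarrow> (\<forall>v\<in>U. F v \<le> F u)) \<and>
         (\<forall>s\<in>SS. \<forall>u\<in>U. (\<Sum>u'\<in>U. M s u' * \<rho> u' u) - M s u * (\<Sum>u'\<in>U. \<rho> u u') = 0)"
proof -
  have r0: "\<rho> u v = 0" if "u \<in> U" "v \<in> U" "F v \<le> F u" for u v
  proof -
    have "sgn (\<tau> F u v) = 0" using tsg that by (simp add: max_def)
    then show ?thesis using rho_eq that by (simp add: sgn_0_0)
  qed
  have rp: "\<rho> u v > 0" if "u \<in> U" "v \<in> U" "F v > F u" for u v
  proof -
    have "sgn (\<tau> F u v) = 1" using tsg that by (simp add: max_def)
    then show ?thesis using rho_eq that by (simp add: sgn_1_pos)
  qed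
  have rnn: "\<rho> u v \<ge> 0" if "u \<in> U" "v \<in> U" for u v using rho_eq tsg that by simp
  have NE: "\<forall>u\<in>U. \<sigma> u > 0 \<longrightarrow> (\<forall>v\<in>U. F v \<le> F u)"
  proof (rule ccontr)
    assume "\<not> ?thesis"
    then obtain u v where u: "u \<in> U" "\<sigma> u > 0" and v: "v \<in> U" "F v > F u" by (auto simp: not_le)
    define P where "P = {x\<in>U. \<sigma> x > 0}"
    have finP: "finite P" using finU by (simp add: P_def)
    have uP: "u \<in> P" using u by (simp add: P_def)
    define mn where "mn = Min (F ` P)"
    have "mn \<in> F ` P" unfolding mn_def using finP uP by (intro Min_in) auto
    then obtain u0 where u0: "u0 \<in> P" "F u0 = mn" by auto
    have minP: "F u0 \<le> F x" if "x \<in> P" for x using u0 finP that by (simp add: mn_def)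
    have u0U: "u0 \<in> U" and su0: "\<sigma> u0 > 0" using u0 by (auto simp: P_def)
    have Fu0: "F u0 < F v" using minP[OF uP] v by simp
    have in0: "(\<Sum>u'\<in>U. \<sigma> u' * \<rho> u' u0) = 0"
    proof (rule sum.neutral, rule ballI)
      fix x assume x: "x \<in> U"
      show "\<sigma> x * \<rho> x u0 = 0"
      proof (cases "\<sigma> x > 0")
        case True
        then have "F u0 \<le> F x" using minP x by (simp add: P_def)
        then show ?thesis using r0 x u0U by simp
      next
        case False then have "\<sigma> x = 0" using sig_nn x by force
        then show ?thesis by simp
      qed
    qed
    have "\<rho> u0 v \<le> (\<Sum>u'\<in>U. \<rho> u0 u')"
      by (rule member_le_sum) (use v finU rnn u0U in auto)
    moreover have "\<rho> u0 v > 0" using rp u0U v Fu0 by simp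
    ultimately have "\<sigma> u0 * (\<Sum>u'\<in>U. \<rho> u0 u') > 0" using su0 by simp
    then show False using agg u0U in0 by auto
  qed
  have Mz: "M s u = 0" if "s \<in> SS" "u \<in> U" "\<sigma> u = 0" for s u
    using zero_mass[OF finS, of M u s] M_nn M_sig that by auto
  have fr0: "(\<Sum>u'\<in>U. M s u' * \<rho> u' u) - M s u * (\<Sum>u'\<in>U. \<rho> u u') = 0"
    if s: "s \<in> SS" and u: "u \<in> U" for s u
  proof -
    have a: "(\<Sum>u'\<in>U. M s u' * \<rho> u' u) = 0"
    proof (rule sum.neutral, rule ballI)
      fix x assume x: "x \<in> U"
      show "M s x * \<rho> x u = 0"
      proof (cases "\<sigma> x > 0")
        case True then show ?thesis using NE x u r0 by simp
      next
        case False then have "\<sigma> x = 0" using sig_nn x by force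
        then show ?thesis using Mz[OF s x] by simp
      qed
    qed
    have b: "M s u * (\<Sum>u'\<in>U. \<rho> u u') = 0"
    proof (cases "\<sigma> u > 0")
      case True
      then have "(\<Sum>u'\<in>U. \<rho> u u') = 0" using NE u r0 by (intro sum.neutral) simp
      then show ?thesis by simp
    next
      case False then have "\<sigma> u = 0" using sig_nn u by force
      then show ?thesis using Mz[OF s u] by simp
    qed
    show ?thesis using a b by simp
  qed
  show ?thesis using NE fr0 by blast
qed

theorem theorem5:
  fixes S :: "'c::finite \<Rightarrow> 's::finite set"
    and A :: "'c \<Rightarrow> 's \<Rightarrow> 'a::finite set"
    and phi :: "'c \<Rightarrow> 's \<Rightarrow> 's \<Rightarrow> 'a \<Rightarrow> real"
    and lam m R :: "'c \<Rightarrow> real"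
    and r :: "'c \<Rightarrow> 's \<Rightarrow> 'a \<Rightarrow> real ^ ('c \<times> 's \<times> 'a) \<Rightarrow> real"
    and rho :: "'c \<Rightarrow> (('s \<Rightarrow> 'a) \<Rightarrow> real) \<Rightarrow> (('s \<Rightarrow> 'a) \<Rightarrow> real) \<Rightarrow> ('s \<Rightarrow> 'a) \<Rightarrow> ('s \<Rightarrow> 'a) \<Rightarrow> real"
    and mu :: "'c \<Rightarrow> 's \<Rightarrow> ('s \<Rightarrow> 'a) \<Rightarrow> real"
  assumes m_pos: "\<forall>c. m c > 0"
    and lam_pos: "\<forall>c. lam c > 0"
    and S_ne: "\<forall>c. S c \<noteq> {}"
    and A_ne: "\<forall>c. \<forall>s\<in>S c. A c s \<noteq> {}"
    and phi_nonneg: "\<forall>c. \<forall>s'\<in>S c. \<forall>a\<in>A c s'. \<forall>s\<in>S c. phi c s s' a \<ge> 0"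
    and phi_sum: "\<forall>c. \<forall>s'\<in>S c. \<forall>a\<in>A c s'. (\<Sum>s\<in>S c. phi c s s' a) = 1"
    and A1: "A1 S A m r"
    and A2: "A2 S A phi"
    and A3: "A3 S A phi lam m r rho R"
    and R_pos: "\<forall>c. R c > 0"
    and rho_nonneg: "\<forall>c. rho_nonneg S A m rho c"
    and protocol: "\<forall>c. excess_payoff_protocol S A m rho c \<or> pairwise_comparison_protocol S A m rho c"
    and mu_X: "mu \<in> Xset S A m"
    and rest: "\<forall>c. \<forall>s\<in>S c. \<forall>u\<in>Pols S A c.
                 fd S A phi lam mu c s u + fr S A phi lam r rho mu c s u = 0"
  shows "MSNE S A phi lam m r mu"
proof -
  have main: "(mass_pol S mu c u > 0 \<longrightarrow> (\<forall>v\<in>Pols S A c. Fpay S A phi lam r mu c u \<ge> Fpay S A phi lam r mu c v)) \<and>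
        (\<forall>s\<in>S c. mu c s u = eta S phi lam c u s * mass_pol S mu c u)"
    if uU: "u \<in> Pols S A c" for c u
  proof -
    define U where "U = Pols S A c"
    define F where "F = Fpay S A phi lam r mu c"
    define \<sigma> where "\<sigma> = mass_pol S mu c"
    define \<rho> where "\<rho> = rho c F \<sigma>"
    have finS: "finite (S c)" by simp
    have finU: "finite U" by simp
    have pS: "v s \<in> A c s" if "v \<in> U" "s \<in> S c" for v s
      using that by (auto simp: U_def Pols_def PiE_def)
    have mu_nn: "\<forall>s\<in>S c. \<forall>v\<in>U. mu c s v \<ge> 0" and mu_sum: "(\<Sum>s\<in>S c. \<Sum>v\<in>U. mu c s v) = m c"
      using mu_X by (auto simp: Xset_def U_def)
    have sig_nn: "\<forall>v\<in>U. \<sigma> v \<ge> 0" using mu_nn by (auto simp: \<sigma>_def mass_pol_def intro: sum_nonneg)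
    have sig_sum: "sum \<sigma> U = m c" using mu_sum by (simp add: \<sigma>_def mass_pol_def sum.swap[of _ U])
    have M_sig: "\<forall>v\<in>U. \<sigma> v = (\<Sum>s\<in>S c. mu c s v)" by (simp add: \<sigma>_def mass_pol_def)
    have sigXU: "\<sigma> \<in> XU S A m c" using sig_nn sig_sum by (simp add: XU_def U_def)
    have fd_eq: "fd S A phi lam mu c s v = lam c * (\<Sum>s'\<in>S c. phi c s s' (v s') * mu c s' v) - lam c * mu c s v"
      if v: "v \<in> U" for s v
    proof -
      have "(\<Sum>a'\<in>A c s'. phi c s s' a' * pol v s' a' * mu c s' v) = phi c s s' (v s') * mu c s' v"
        if s': "s' \<in> S c" for s'
      proof -
        have "(\<Sum>a'\<in>A c s'. phi c s s' a' * pol v s' a' * mu c s' v) =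
              (\<Sum>a'\<in>A c s'. if a' = v s' then phi c s s' (v s') * mu c s' v else 0)"
          by (rule sum.cong) (auto simp: pol_def)
        also have "\<dots> = phi c s s' (v s') * mu c s' v" using pS[OF v s'] by simp
        finally show ?thesis .
      qed
      then show ?thesis by (simp add: fd_def)
    qed
    have fd_sum: "(\<Sum>s\<in>S c. fd S A phi lam mu c s v) = 0" if v: "v \<in> U" for v
    proof -
      have "(\<Sum>s\<in>S c. \<Sum>s'\<in>S c. phi c s s' (v s') * mu c s' v) = (\<Sum>s'\<in>S c. (\<Sum>s\<in>S c. phi c s s' (v s')) * mu c s' v)"
        by (subst sum.swap) (simp add: sum_distrib_right)
      also have "\<dots> = (\<Sum>s'\<in>S c. mu c s' v)"
        by (rule sum.cong) (use phi_sum pS[OF v] in auto)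
      finally have "(\<Sum>s\<in>S c. \<Sum>s'\<in>S c. phi c s s' (v s') * mu c s' v) = (\<Sum>s'\<in>S c. mu c s' v)" .
      then show ?thesis using fd_eq[OF v]
        by (simp add: sum_subtractf sum_distrib_left[symmetric])
    qed
    have fr_eq: "fr S A phi lam r rho mu c s v = (\<Sum>u'\<in>U. mu c s u' * \<rho> u' v) - mu c s v * (\<Sum>u'\<in>U. \<rho> v u')" for s v
      by (simp add: fr_def U_def \<rho>_def F_def \<sigma>_def)
    have agg: "\<forall>v\<in>U. (\<Sum>u'\<in>U. \<sigma> u' * \<rho> u' v) - \<sigma> v * (\<Sum>u'\<in>U. \<rho> v u') = 0"
    proof
      fix v assume v: "v \<in> U"
      have "(\<Sum>s\<in>S c. fd S A phi lam mu c s v + fr S A phi lam r rho mu c s v) = 0"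
        using rest v by (simp add: U_def)
      then have z: "(\<Sum>s\<in>S c. fr S A phi lam r rho mu c s v) = 0" using fd_sum[OF v] by (simp add: sum.distrib)
      have "(\<Sum>s\<in>S c. fr S A phi lam r rho mu c s v) =
             (\<Sum>s\<in>S c. \<Sum>u'\<in>U. mu c s u' * \<rho> u' v) - (\<Sum>s\<in>S c. mu c s v) * (\<Sum>u'\<in>U. \<rho> v u')"
        by (simp add: fr_eq sum_subtractf sum_distrib_right)
      also have "(\<Sum>s\<in>S c. \<Sum>u'\<in>U. mu c s u' * \<rho> u' v) = (\<Sum>u'\<in>U. \<sigma> u' * \<rho> u' v)"
        by (subst sum.swap) (simp add: M_sig sum_distrib_right)
      also have "(\<Sum>s\<in>S c. mu c s v) = \<sigma> v" using M_sig v by simp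
      finally show "(\<Sum>u'\<in>U. \<sigma> u' * \<rho> u' v) - \<sigma> v * (\<Sum>u'\<in>U. \<rho> v u') = 0" using z by simp
    qed
    have res: "(\<forall>u\<in>U. \<sigma> u > 0 \<longrightarrow> (\<forall>v\<in>U. F v \<le> F u)) \<and>
         (\<forall>s\<in>S c. \<forall>u\<in>U. (\<Sum>u'\<in>U. mu c s u' * \<rho> u' u) - mu c s u * (\<Sum>u'\<in>U. \<rho> u u') = 0)"
    proof (cases "excess_payoff_protocol S A m rho c")
      case True
      then obtain \<tau> :: "(('s \<Rightarrow> 'a) \<Rightarrow> real) \<Rightarrow> ('s \<Rightarrow> 'a) \<Rightarrow> real" where
        t1: "\<forall>F \<sigma>. \<sigma> \<in> XU S A m c \<longrightarrow> (\<forall>u\<in>Pols S A c. \<forall>v\<in>Pols S A c.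
              rho c F \<sigma> u v = \<tau> (\<lambda>w. F w - (\<Sum>w'\<in>Pols S A c. F w' * \<sigma> w') / m c) v)"
        and t2: "\<exists>L. \<forall>G G'. \<forall>v\<in>Pols S A c. \<bar>\<tau> G v - \<tau> G' v\<bar> \<le> L * (\<Sum>w\<in>Pols S A c. \<bar>G w - G' w\<bar>)"
        and t3: "\<forall>G. \<forall>v\<in>Pols S A c. \<tau> G v \<ge> 0"
        and t4: "\<forall>G. (\<exists>v\<in>Pols S A c. G v > 0) \<longrightarrow> (\<Sum>v\<in>Pols S A c. \<tau> G v * G v) > 0"
        unfolding excess_payoff_protocol_def by blast
      have re: "\<forall>u\<in>U. \<forall>v\<in>U. \<rho> u v = \<tau> (\<lambda>w. F w - (\<Sum>w'\<in>U. F w' * \<sigma> w') / m c) v"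
        using t1 sigXU by (simp add: \<rho>_def U_def)
      show ?thesis
        by (rule excess_case[where U=U and SS="S c" and m="m c" and \<sigma>=\<sigma> and \<rho>=\<rho> and \<tau>=\<tau> and F=F and M="mu c"])
           (use finU finS sig_nn sig_sum re m_pos t2 t3 t4 agg mu_nn M_sig in \<open>simp_all add: U_def\<close>)
    next
      case False
      then have "pairwise_comparison_protocol S A m rho c" using protocol by blast
      then obtain \<tau> :: "(('s \<Rightarrow> 'a) \<Rightarrow> real) \<Rightarrow> ('s \<Rightarrow> 'a) \<Rightarrow> ('s \<Rightarrow> 'a) \<Rightarrow> real" where
        t1: "\<forall>F \<sigma>. \<sigma> \<in> XU S A m c \<longrightarrow> (\<forall>u\<in>Pols S A c. \<forall>v\<in>Pols S A c. rho c F \<sigma> u v = \<tau> F u v)"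
        and t3: "\<forall>G. \<forall>u\<in>Pols S A c. \<forall>v\<in>Pols S A c. \<tau> G u v \<ge> 0 \<and> sgn (\<tau> G u v) = sgn (max 0 (G v - G u))"
        unfolding pairwise_comparison_protocol_def by blast
      have re: "\<forall>u\<in>U. \<forall>v\<in>U. \<rho> u v = \<tau> F u v"
        using t1 sigXU by (simp add: \<rho>_def U_def)
      show ?thesis
        by (rule pairwise_case[where U=U and SS="S c" and \<sigma>=\<sigma> and \<rho>=\<rho> and \<tau>=\<tau> and F=F and M="mu c"])
           (use finU finS sig_nn re t3 agg mu_nn M_sig in \<open>simp_all add: U_def\<close>)
    qed
    have uU': "u \<in> U" using uU by (simp add: U_def)
    have NEu: "\<sigma> u > 0 \<longrightarrow> (\<forall>v\<in>U. F v \<le> F u)" using res uU' by blast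
    have fd0: "lam c * (\<Sum>s'\<in>S c. phi c s s' (u s') * mu c s' u) - lam c * mu c s u = 0" if s: "s \<in> S c" for s
    proof -
      have f1: "fr S A phi lam r rho mu c s u = 0" using res s uU' fr_eq[of s u] by simp
      have f2: "fd S A phi lam mu c s u + fr S A phi lam r rho mu c s u = 0" using rest s uU by blast
      show ?thesis using f1 f2 fd_eq[OF uU', of s] by linarith
    qed
    have st: "mu c s u = (\<Sum>s'\<in>S c. phi c s s' (u s') * mu c s' u)" if s: "s \<in> S c" for s
    proof -
      have "lam c > 0" using lam_pos by blast
      then show ?thesis using fd0[OF s] by (simp add: right_diff_distrib[symmetric])
    qed
    have ii: "\<forall>s\<in>S c. mu c s u = eta S phi lam c u s * \<sigma> u"
    proof (cases "\<sigma> u = 0")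
      case True
      have "(\<Sum>s\<in>S c. mu c s u) = 0" using True M_sig uU' by metis
      moreover have "\<forall>s\<in>S c. mu c s u \<ge> 0" using mu_nn uU' by blast
      ultimately have "\<forall>s\<in>S c. mu c s u = 0" using zero_mass[OF finS, of "mu c" u] by blast
      then show ?thesis using True by simp
    next
      case False
      then have sp: "\<sigma> u > 0" using sig_nn uU' by force
      define \<eta> where "\<eta> s = (if s \<in> S c then mu c s u / \<sigma> u else 0)" for s
      have sd: "stat_dist S phi lam c u \<eta>"
        unfolding stat_dist_def
      proof (intro conjI ballI allI impI)
        show "\<eta> s = 0" if "s \<notin> S c" for s using that by (simp add: \<eta>_def)
        show "\<eta> s \<ge> 0" if "s \<in> S c" for s using that mu_nn uU' sp by (simp add: \<eta>_def)
        have "sum \<eta> (S c) = (\<Sum>s\<in>S c. mu c s u) / \<sigma> u" by (simp add: \<eta>_def sum_divide_distrib)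
        then show "sum \<eta> (S c) = 1" using M_sig uU' sp by simp
        fix s assume s: "s \<in> S c"
        have "(\<Sum>s'\<in>S c. phi c s s' (u s') * \<eta> s') = (\<Sum>s'\<in>S c. phi c s s' (u s') * mu c s' u) / \<sigma> u"
          by (simp add: \<eta>_def sum_divide_distrib)
        also have "\<dots> = \<eta> s" using st[OF s] s by (simp add: \<eta>_def)
        finally show "lam c * ((\<Sum>s'\<in>S c. phi c s s' (u s') * \<eta> s') - \<eta> s) = 0" by simp
      qed
      have "eta S phi lam c u = \<eta>"
        unfolding eta_def
      proof (rule the_equality)
        show "stat_dist S phi lam c u \<eta>" by (rule sd)
        fix x assume x: "stat_dist S phi lam c u x"
        show "x = \<eta>"
        proof (rule stat_unique[OF _ _ _ finS _ x sd])
          show "unique_recurrent_class S phi c u" using A2 uU by (simp add: A2_def)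
          show "\<forall>s\<in>S c. \<forall>t\<in>S c. 0 \<le> phi c t s (u s)" using phi_nonneg pS uU' by blast
          show "\<forall>s\<in>S c. (\<Sum>t\<in>S c. phi c t s (u s)) = 1" using phi_sum pS uU' by blast
          show "lam c > 0" using lam_pos by blast
        qed
      qed
      then show ?thesis using sp by (simp add: \<eta>_def)
    qed
    show ?thesis using NEu ii by (simp add: U_def F_def \<sigma>_def)
  qed
  show ?thesis unfolding MSNE_def using mu_X main by blast
qed

end
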